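(* Let $1\le k\le\ell\le\lfloor n/2\rfloor$, $\lambda=(n-k,k)$, $\mu=(n-\ell,\ell)$, and let $P$ be the random transpositions chain on $\mathcal{T}_{\lambda,\mu}$ with stationary distribution $\pi_{\lambda,\mu}$. If $c>0$ and $t=(n/4)(\log(k)+c)$, then \[ \sum_{\mathbf{x}\in\mathcal{T}_{\lambda,\mu}}\pi_{\lambda,\mu}(\mathbf{x})\,\|P^t(\mathbf{x},\cdot)-\pi_{\lambda,\mu}\|_{TV}^2\le e^{-c}. \] If $t=cn/4$, then \[ \sum_{\mathbf{x}\in\mathcal{T}_{\lambda,\mu}}\pi_{\lambda,\mu}(\mathbf{x})\,\chi^2_{\mathbf{x}}(t)\ge 1-c. \]
   Context: $\mathcal{T}_{\lambda,\mu}$ is the set of $2\times2$ nonnegative integer tables with row sums $n-k,k$ and column sums $n-\ell,\ell$. The Fisher–Yates distribution is $\pi_{\lambda,\mu}(T)=\frac1{n!}\prod_{i,j}\frac{\lambda_i!\mu_j!}{T_{ij}!}$. The random transpositions chain: for $T'$ obtained from $T$ by subtracting $1$ at cells $(i_1,j_1),(i_2,j_2)$ and adding $1$ at $(i_1,j_2),(i_2,j_1)$ (with $i_1\ne i_2$, $j_1\ne j_2$), $P(T,T')=2T_{i_1j_1}T_{i_2j_2}/n^2$; $P(T,T)$ is the remaining mass. $\|\nu-\pi\|_{TV}=\sup_A|\nu(A)-\pi(A)|$ and $\chi^2_{\mathbf{x}}(t)=\sum_{\mathbf{y}}\frac{(P^t(\mathbf{x},\mathbf{y})-\pi_{\lambda,\mu}(\mathbf{y}))^2}{\pi_{\lambda,\mu}(\mathbf{y})}$.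 *)

theory Defs
  imports Complex_Main
begin

text \<open>A 2x2 table T is encoded as the 4-tuple (T11, T12, T21, T22).\<close>
type_synonym table = "nat \<times> nat \<times> nat \<times> nat"

definition tables :: "nat \<Rightarrow> nat \<Rightarrow> nat \<Rightarrow> table set" where
  "tables n k l = {(a,b,c,d). a + b = n - k \<and> c + d = k \<and> a + c = n - l \<and> b + d = l}"

definition fy :: "nat \<Rightarrow> nat \<Rightarrow> nat \<Rightarrow> table \<Rightarrow> real" where
  "fy n k l T = (case T of (a,b,c,d) \<Rightarrow>
     (fact (n-k) * fact k * fact (n-l) * fact l) /
     (fact n * fact a * fact b * fact c * fact d))"

definition rt_off :: "nat \<Rightarrow> table \<Rightarrow> table \<Rightarrow> real" where
  "rt_off n T T' = (case T of (a,b,c,d) \<Rightarrow>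
     if T' = T then 0
     else if 1 \<le> a \<and> 1 \<le> d \<and> T' = (a - 1, b + 1, c + 1, d - 1)
       then 2 * real a * real d / (real n)^2
     else if 1 \<le> b \<and> 1 \<le> c \<and> T' = (a + 1, b - 1, c - 1, d + 1)
       then 2 * real b * real c / (real n)^2
     else 0)"

definition rt :: "nat \<Rightarrow> nat \<Rightarrow> nat \<Rightarrow> table \<Rightarrow> table \<Rightarrow> real" where
  "rt n k l T T' = (if T' = T
     then 1 - (\<Sum>S\<in>tables n k l - {T}. rt_off n T S)
     else rt_off n T T')"

fun rt_pow :: "nat \<Rightarrow> nat \<Rightarrow> nat \<Rightarrow> nat \<Rightarrow> table \<Rightarrow> table \<Rightarrow> real" where
  "rt_pow n k l 0 x y = (if x = y then 1 else 0)"
| "rt_pow n k l (Suc t) x y = (\<Sum>z\<in>tables n k l. rt_pow n k l t x z * rt n k l z y)"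

definition tv_dist :: "nat \<Rightarrow> nat \<Rightarrow> nat \<Rightarrow> nat \<Rightarrow> table \<Rightarrow> real" where
  "tv_dist n k l t x = (SUP A\<in>Pow (tables n k l).
     \<bar>(\<Sum>y\<in>A. rt_pow n k l t x y) - (\<Sum>y\<in>A. fy n k l y)\<bar>)"

definition chi2 :: "nat \<Rightarrow> nat \<Rightarrow> nat \<Rightarrow> nat \<Rightarrow> table \<Rightarrow> real" where
  "chi2 n k l t x = (\<Sum>y\<in>tables n k l. (rt_pow n k l t x y - fy n k l y)^2 / fy n k l y)"

end

theory Submission
  imports Defs
begin

locale tabs =
  fixes n k l :: nat
  assumes k1: "1 \<le> k" and kl: "k \<le> l" and ln: "l \<le> n div 2"
begin

definition tb :: "nat \<Rightarrow> table" where
  "tb d = (n - k - l + d, l - d, k - d, d)"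

lemma n_ge: "k + l \<le> n" using k1 kl ln by linarith
lemma n2: "n \<ge> 2" using k1 kl ln by linarith

lemma tb_inj: "inj_on tb {0..k}"
  by (auto simp: inj_on_def tb_def)

lemma tables_eq: "tables n k l = tb ` {0..k}"
proof
  show "tb ` {0..k} \<subseteq> tables n k l" using n_ge kl by (auto simp: tb_def tables_def)
next
  show "tables n k l \<subseteq> tb ` {0..k}"
  proof
    fix x assume "x \<in> tables n k l"
    then obtain a b c d where x: "x = (a,b,c,d)" "a + b = n - k" "c + d = k" "a + c = n - l" "b + d = l"
      by (auto simp: tables_def)
    then have "x = tb d" "d \<in> {0..k}" using n_ge by (auto simp: tb_def)
    then show "x \<in> tb ` {0..k}" by blast
  qed
qed

lemma sum_tables: "(\<Sum>x\<in>tables n k l. f x) = (\<Sum>d\<in>{0..k}. f (tb d))"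
  by (simp add: tables_eq sum.reindex[OF tb_inj])

lemma finite_tables: "finite (tables n k l)" by (simp add: tables_eq)

definition pd :: "nat \<Rightarrow> real" where
  "pd d = 2 * real (n - k - l + d) * real d / (real n)^2"
definition pu :: "nat \<Rightarrow> real" where
  "pu d = 2 * real (l - d) * real (k - d) / (real n)^2"
definition Pm :: "nat \<Rightarrow> nat \<Rightarrow> real" where
  "Pm d e = (if e = d then 1 - pd d - pu d else if e + 1 = d then pd d else if e = d + 1 then pu d else 0)"

lemma rt_off_tb: assumes "d \<le> k" "e \<le> k" "e \<noteq> d"
  shows "rt_off n (tb d) (tb e) = (if e + 1 = d then pd d else if e = d + 1 then pu d else 0)"
proof -
  have ne: "tb e \<noteq> tb d" using assms by (simp add: tb_def)
  have A: "(1 \<le> n - k - l + d \<and> 1 \<le> d \<and> tb e = (n - k - l + d - 1, l - d + 1, k - d + 1, d - 1)) \<longleftrightarrow> e + 1 = d"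
    using assms n_ge kl by (auto simp: tb_def)
  have B: "(1 \<le> l - d \<and> 1 \<le> k - d \<and> tb e = (n - k - l + d + 1, l - d - 1, k - d - 1, d + 1)) \<longleftrightarrow> e = d + 1"
    using assms n_ge kl by (auto simp: tb_def)
  show ?thesis
    unfolding rt_off_def using ne A B
    by (simp add: tb_def[of d] pd_def pu_def del: One_nat_def)
qed

lemma pd0: "pd 0 = 0" by (simp add: pd_def)
lemma puk: "pu k = 0" by (simp add: pu_def)

lemma rt_tb: assumes "d \<le> k" "e \<le> k"
  shows "rt n k l (tb d) (tb e) = Pm d e"
proof (cases "e = d")
  case True
  have "(\<Sum>S\<in>tables n k l - {tb d}. rt_off n (tb d) S) = (\<Sum>S\<in>tb ` ({0..k} - {d}). rt_off n (tb d) S)"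
    using tb_inj assms by (simp add: tables_eq inj_on_image_set_diff[OF tb_inj])
  also have "\<dots> = (\<Sum>e\<in>{0..k} - {d}. rt_off n (tb d) (tb e))"
    by (subst sum.reindex) (auto intro: inj_on_subset[OF tb_inj])
  also have "\<dots> = (\<Sum>e\<in>{0..k} - {d}. (if e + 1 = d then pd d else if e = d + 1 then pu d else 0))"
    by (rule sum.cong) (use assms in \<open>auto simp: rt_off_tb\<close>)
  also have "\<dots> = (\<Sum>e\<in>{0..k} - {d}. (if e = d - 1 then (if d = 0 then 0 else pd d) else 0) + (if e = d + 1 then pu d else 0))"
    by (rule sum.cong) auto
  also have "\<dots> = pd d + pu d"
    using assms k1 by (simp add: sum.distrib pd0 puk) (cases "d = k"; auto simp: puk)

  finally show ?thesis using True by (simp add: rt_def Pm_def)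
next
  case False
  then have "tb e \<noteq> tb d" using tb_inj assms by (auto simp: tb_def)
  then show ?thesis using False assms by (simp add: rt_def Pm_def rt_off_tb)
qed

end

context tabs begin

definition Q :: "nat \<Rightarrow> nat \<Rightarrow> nat \<Rightarrow> real" where
  "Q t d e = rt_pow n k l t (tb d) (tb e)"

abbreviation K :: "nat set" where "K \<equiv> {0..k}"

lemma Q_0: "d \<le> k \<Longrightarrow> e \<le> k \<Longrightarrow> Q 0 d e = (if d = e then 1 else 0)"
  by (auto simp: Q_def tb_def)

lemma Q_Suc: "d \<le> k \<Longrightarrow> e \<le> k \<Longrightarrow> Q (Suc t) d e = (\<Sum>r\<in>K. Q t d r * Pm r e)"
  by (simp add: Q_def sum_tables rt_tb)

lemma Pm_row: assumes "d \<le> k" shows "(\<Sum>e\<in>K. Pm d e) = 1"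
proof -
  have "(\<Sum>e\<in>K. Pm d e) = (\<Sum>e\<in>K. (if e = d then 1 - pd d - pu d else 0) +
     (if e = d - 1 then (if d = 0 then 0 else pd d) else 0) + (if e = d + 1 then pu d else 0))"
    by (rule sum.cong) (auto simp: Pm_def pd0)
  also have "\<dots> = 1"
    using assms k1 by (simp add: sum.distrib pd0 puk) (cases "d = k"; auto simp: puk)
  finally show ?thesis .
qed

lemma Q_row: "d \<le> k \<Longrightarrow> (\<Sum>e\<in>K. Q t d e) = 1"
proof (induction t arbitrary: d)
  case 0
  then show ?case by (simp add: Q_0)
next
  case (Suc t)
  have "(\<Sum>e\<in>K. Q (Suc t) d e) = (\<Sum>e\<in>K. \<Sum>r\<in>K. Q t d r * Pm r e)"
    using Suc.prems by (intro sum.cong) (auto simp: Q_Suc)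
  also have "\<dots> = (\<Sum>r\<in>K. Q t d r * (\<Sum>e\<in>K. Pm r e))"
    by (subst sum.swap) (simp add: sum_distrib_left)
  also have "\<dots> = (\<Sum>r\<in>K. Q t d r)"
    by (intro sum.cong) (auto simp: Pm_row)
  finally show ?case using Suc by simp
qed

lemma Q_CK: "d \<le> k \<Longrightarrow> e \<le> k \<Longrightarrow> Q (s + t) d e = (\<Sum>r\<in>K. Q s d r * Q t r e)"
proof (induction t arbitrary: e)
  case 0
  have "(\<Sum>r\<in>K. Q s d r * Q 0 r e) = (\<Sum>r\<in>K. if r = e then Q s d r else 0)"
    using 0 by (intro sum.cong) (auto simp: Q_0)
  then show ?case using 0 by simp
next
  case (Suc t)
  have "Q (s + Suc t) d e = (\<Sum>m\<in>K. Q (s + t) d m * Pm m e)"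
    using Suc.prems by (simp add: Q_Suc)
  also have "\<dots> = (\<Sum>m\<in>K. (\<Sum>r\<in>K. Q s d r * Q t r m) * Pm m e)"
    using Suc by (intro sum.cong) auto
  also have "\<dots> = (\<Sum>r\<in>K. Q s d r * (\<Sum>m\<in>K. Q t r m * Pm m e))"
    by (simp add: sum_distrib_left sum_distrib_right mult.assoc) (rule sum.swap)
  also have "\<dots> = (\<Sum>r\<in>K. Q s d r * Q (Suc t) r e)"
    using Suc.prems by (intro sum.cong) (auto simp: Q_Suc)
  finally show ?case .
qed

lemma Q_1: "d \<le> k \<Longrightarrow> e \<le> k \<Longrightarrow> Q (Suc 0) d e = Pm d e"
proof -
  assume a: "d \<le> k" "e \<le> k"
  have "Q (Suc 0) d e = (\<Sum>r\<in>K. Q 0 d r * Pm r e)" using a by (simp add: Q_Suc)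
  also have "\<dots> = (\<Sum>r\<in>K. if r = d then Pm r e else 0)"
    using a by (intro sum.cong) (auto simp: Q_0)
  finally show ?thesis using a by simp
qed

lemma Q_Suc': assumes "d \<le> k" "e \<le> k" shows "Q (Suc t) d e = (\<Sum>r\<in>K. Pm d r * Q t r e)"
proof -
  have "(\<Sum>r\<in>K. Q 1 d r * Q t r e) = (\<Sum>r\<in>K. Pm d r * Q t r e)"
    using assms by (intro sum.cong) (auto simp: Q_1)
  then show ?thesis using Q_CK[of d e 1 t] assms by simp
qed

definition pi :: "nat \<Rightarrow> real" where "pi d = fy n k l (tb d)"

lemma pi_pos: "pi d > 0"
  by (simp add: pi_def fy_def tb_def)


end

context tabs begin
lemma pi_binom: assumes "d \<le> k"
  shows "pi d = real (l choose d) * real ((n - l) choose (k - d)) / real (n choose k)"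
proof -
  have e1: "n - l - (k - d) = n - k - l + d" using assms n_ge kl by simp
  have b1: "real (l choose d) = fact l / (fact d * fact (l - d))"
    using assms kl by (simp add: binomial_fact)
  have b2: "real ((n - l) choose (k - d)) = fact (n - l) / (fact (k - d) * fact (n - k - l + d))"
    unfolding e1[symmetric] using assms kl n_ge by (intro binomial_fact) simp
  have b3: "real (n choose k) = fact n / (fact k * fact (n - k))"
    using n_ge by (simp add: binomial_fact)
  have gen: "\<And>A B C D E F G H I :: real. A > 0 \<Longrightarrow> B > 0 \<Longrightarrow> C > 0 \<Longrightarrow> D > 0 \<Longrightarrow> E > 0 \<Longrightarrow>
     F > 0 \<Longrightarrow> G > 0 \<Longrightarrow> H > 0 \<Longrightarrow> I > 0 \<Longrightarrow>
     (A * B * C * D) / (E * F * G * H * I) = (D / (I * G)) * (C / (H * F)) / (E / (B * A))"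
    by (simp add: field_simps)
  have "pi d = (fact (n - k) * fact k * fact (n - l) * fact l) /
     (fact n * fact (n - k - l + d) * fact (l - d) * fact (k - d) * fact d)"
    by (simp add: pi_def fy_def tb_def)
  also have "\<dots> = (fact l / (fact d * fact (l - d))) * (fact (n - l) / (fact (k - d) * fact (n - k - l + d)))
      / (fact n / (fact k * fact (n - k)))"
    by (rule gen) auto
  finally show ?thesis by (simp only: b1 b2 b3)
qed

lemma pi_sum: "(\<Sum>d\<in>K. pi d) = 1"
proof -
  have "(\<Sum>d\<in>K. pi d) = (\<Sum>d\<le>k. real (l choose d) * real ((n - l) choose (k - d))) / real (n choose k)"
    by (simp add: pi_binom sum_divide_distrib atLeast0AtMost)
  also have "(\<Sum>d\<le>k. real (l choose d) * real ((n - l) choose (k - d))) = real (n choose k)"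
  proof -
    have "l + (n - l) = n" using n_ge by simp
    then have "(\<Sum>d\<le>k. (l choose d) * ((n - l) choose (k - d))) = n choose k"
      using vandermonde[of l "n - l" k] by simp
    then show ?thesis by (metis (mono_tags, lifting) of_nat_mult of_nat_sum sum.cong)
  qed
  finally show ?thesis using n_ge by simp
qed


end

context tabs begin

lemma db_step: assumes "d < k" shows "pi d * pu d = pi (Suc d) * pd (Suc d)"
proof -
  define a where "a = n - k - l + d"
  define b where "b = l - d - 1"
  define c where "c = k - d - 1"
  define X where "X = (fact (n - k) * fact k * fact (n - l) * fact l / fact n :: real)"
  have lb: "l - d = Suc b" and kc: "k - d = Suc c" using assms kl by (auto simp: b_def c_def)
  have a2: "n - k - l + Suc d = Suc a" by (simp add: a_def)
  have lb2: "l - Suc d = b" and kc2: "k - Suc d = c" by (auto simp: b_def c_def)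
  have p1: "pi d = X / (fact a * fact (Suc b) * fact (Suc c) * fact d)"
    unfolding pi_def fy_def tb_def X_def a_def[symmetric] lb kc by (simp add: field_simps)
  have p2: "pi (Suc d) = X / (fact (Suc a) * fact b * fact c * fact (Suc d))"
    unfolding pi_def fy_def tb_def X_def a2 lb2 kc2 by (simp add: field_simps)
  have u: "pu d = 2 * real (Suc b) * real (Suc c) / (real n)^2" unfolding pu_def lb kc ..
  have dd: "pd (Suc d) = 2 * real (Suc a) * real (Suc d) / (real n)^2" unfolding pd_def a2 ..
  have canc: "\<And>(fa::real) fb fc fd u v N. u \<noteq> 0 \<Longrightarrow> v \<noteq> 0 \<Longrightarrow>
     X / (fa * (u * fb) * (v * fc) * fd) * (2 * u * v / N) = 2 * X / (fa * fb * fc * fd * N)"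
    by (simp add: field_simps)
  have canc2: "\<And>(fa::real) fb fc fd u v N. u \<noteq> 0 \<Longrightarrow> v \<noteq> 0 \<Longrightarrow>
     X / ((u * fa) * fb * fc * (v * fd)) * (2 * u * v / N) = 2 * X / (fa * fb * fc * fd * N)"
    by (simp add: field_simps)
  have gen: "\<And>(fa::real) fb fc fd. 
     X / (fa * ((1 + real b) * fb) * ((1 + real c) * fc) * fd) * (2 * (1 + real b) * (1 + real c) / (real n)^2)
   = X / (((1 + real a) * fa) * fb * fc * ((1 + real d) * fd)) * (2 * (1 + real a) * (1 + real d) / (real n)^2)"
    by (subst canc, simp, simp, subst canc2, simp, simp, simp)
  show ?thesis unfolding p1 p2 u dd fact_Suc of_nat_mult of_nat_Suc
    by (rule gen)
qed

lemma detbal: assumes "d \<le> k" "e \<le> k" shows "pi d * Pm d e = pi e * Pm e d"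
proof -
  consider "e = d" | "e = d + 1" | "d = e + 1" | "e \<noteq> d" "e \<noteq> d + 1" "d \<noteq> e + 1" by blast
  then show ?thesis
  proof cases
    case 2 then show ?thesis using db_step[of d] assms by (simp add: Pm_def)
  next
    case 3 then show ?thesis using db_step[of e] assms by (simp add: Pm_def)
  qed (auto simp: Pm_def)
qed

lemma Q_rev: assumes "d \<le> k" "e \<le> k" shows "pi d * Q t d e = pi e * Q t e d"
  using assms
proof (induction t arbitrary: e)
  case 0 then show ?case by (simp add: Q_0)
next
  case (Suc t)
  have "pi d * Q (Suc t) d e = (\<Sum>r\<in>K. (pi d * Q t d r) * Pm r e)"
    using Suc.prems by (simp add: Q_Suc sum_distrib_left mult.assoc)
  also have "\<dots> = (\<Sum>r\<in>K. Q t r d * (pi r * Pm r e))"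
    using Suc by (intro sum.cong) (auto simp: mult_ac)
  also have "\<dots> = (\<Sum>r\<in>K. Q t r d * (pi e * Pm e r))"
    using Suc.prems by (intro sum.cong) (auto simp: detbal)
  also have "\<dots> = pi e * Q (Suc t) e d"
    using Suc.prems by (simp add: Q_Suc' sum_distrib_left mult_ac)
  finally show ?case .
qed

lemma chi_sum_trace:
  "(\<Sum>d\<in>K. pi d * (\<Sum>e\<in>K. (Q t d e - pi e)^2 / pi e)) = (\<Sum>d\<in>K. Q (t + t) d d) - 1"
proof -
  have trm: "pi d * (Q t d e - pi e)^2 / pi e = Q t d e * Q t e d - 2 * pi d * Q t d e + pi d * pi e"
    if "d \<le> k" "e \<le> k" for d e
  proof -
    have "pi d * (Q t d e - pi e)^2 / pi e = (pi d * Q t d e) * Q t d e / pi e - 2 * pi d * Q t d e + pi d * pi e"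
      using pi_pos[of e] by (simp add: field_simps power2_eq_square)
    also have "(pi d * Q t d e) * Q t d e / pi e = Q t d e * Q t e d"
      using Q_rev[OF that, of t] pi_pos[of e] by (simp add: field_simps)
    finally show ?thesis .
  qed
  have "(\<Sum>d\<in>K. pi d * (\<Sum>e\<in>K. (Q t d e - pi e)^2 / pi e))
      = (\<Sum>d\<in>K. \<Sum>e\<in>K. Q t d e * Q t e d - 2 * pi d * Q t d e + pi d * pi e)"
    by (simp add: sum_distrib_left) (intro sum.cong refl trm; simp)
  also have "\<dots> = (\<Sum>d\<in>K. Q (t + t) d d - 2 * pi d + pi d)"
    by (intro sum.cong refl)
       (auto simp: sum.distrib sum_subtractf Q_CK sum_distrib_left[symmetric] Q_row pi_sum)
  also have "\<dots> = (\<Sum>d\<in>K. Q (t + t) d d) - 1"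
    by (simp add: sum_subtractf sum.distrib pi_sum)
  finally show ?thesis .
qed

end

lemma core: fixes N n k l d j i X Y Z W :: real
assumes "j = i+1" "d*W = d*Y - j*Y" "d*Y = (j+1)*Z + j*Y" "d*X = j*Y + i*X" "N \<noteq> 0"
shows "Y + 2*(n-k-l+d)*d/N*(W - Y) + 2*(l-d)*(k-d)/N*X = (1 - 2*j*(n-j+1)/N)*Y + 2*(k-j+1)*(l-j+1)/N * X"
proof -
  have h: "N * Y + 2*(n-k-l+d)*d*(W - Y) + 2*(l-d)*(k-d)*X = (N - 2*j*(n-j+1))*Y + 2*(k-j+1)*(l-j+1) * X"
    using assms(1-4) by algebra
  have l: "Y + 2*(n-k-l+d)*d/N*(W - Y) + 2*(l-d)*(k-d)/N*X = (N * Y + 2*(n-k-l+d)*d*(W - Y) + 2*(l-d)*(k-d)*X) / N"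
    using assms(5) by (simp add: field_simps)
  have r: "(1 - 2*j*(n-j+1)/N)*Y + 2*(k-j+1)*(l-j+1)/N * X = ((N - 2*j*(n-j+1))*Y + 2*(k-j+1)*(l-j+1) * X) / N"
    using assms(5) by (simp add: field_simps)
  show ?thesis unfolding l r h ..
qed

lemma binF3: "real d * real (d choose j) = real (Suc j) * real (d choose Suc j) + real j * real (d choose j)"
proof -
  have "Suc d * (d choose j) = (Suc d choose Suc j) * Suc j" by (rule Suc_times_binomial_eq)
  then have "real (Suc d) * real (d choose j) = (real (d choose j) + real (d choose Suc j)) * real (Suc j)"
    by (metis binomial_Suc_Suc of_nat_add of_nat_mult)
  then show ?thesis by (simp add: algebra_simps)
qed

lemma binF2: "real d * (real ((d - 1) choose Suc i) - real (d choose Suc i)) = - real (Suc i) * real (d choose Suc i)"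
proof (cases d)
  case 0 then show ?thesis by simp
next
  case (Suc m)
  have "Suc m * (m choose i) = (Suc m choose Suc i) * Suc i" by (rule Suc_times_binomial_eq)
  then have "real (Suc m) * real (m choose i) = real (Suc m choose Suc i) * real (Suc i)"
    by (metis of_nat_mult)
  then show ?thesis using Suc by (simp add: algebra_simps)
qed

context tabs begin

definition bet :: "nat \<Rightarrow> real" where
  "bet j = 1 - 2 * real j * (real n - real j + 1) / (real n)^2"
definition gam :: "nat \<Rightarrow> real" where
  "gam j = 2 * (real k - real j + 1) * (real l - real j + 1) / (real n)^2"
definition S :: "nat \<Rightarrow> nat \<Rightarrow> real" where "S d j = real (d choose j)"
definition U :: "nat \<Rightarrow> nat \<Rightarrow> real" where
  "U i j = (if i = j then bet j else if i + 1 = j then gam j else 0)"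

lemma Pm_apply: assumes "d \<le> k"
  shows "(\<Sum>e\<in>K. Pm d e * f e) = f d + pd d * (f (d - 1) - f d) + pu d * (f (d + 1) - f d)"
proof -
  have "(\<Sum>e\<in>K. Pm d e * f e) = (\<Sum>e\<in>K. (if e = d then (1 - pd d - pu d) * f d else 0) +
     (if e = d - 1 then (if d = 0 then 0 else pd d * f (d - 1)) else 0) + (if e = d + 1 then pu d * f (d + 1) else 0))"
    by (rule sum.cong) (auto simp: Pm_def pd0)
  also have "\<dots> = (1 - pd d - pu d) * f d + (if d = 0 then 0 else pd d * f (d - 1)) + (if d + 1 \<le> k then pu d * f (d + 1) else 0)"
    using assms by (auto simp: sum.distrib)
  also have "\<dots> = f d + pd d * (f (d - 1) - f d) + pu d * (f (d + 1) - f d)"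
    using assms k1 by (cases "d = 0"; cases "d = k") (auto simp: pd0 puk algebra_simps)
  finally show ?thesis .
qed

lemma PS: assumes "d \<le> k" "j \<le> k"
  shows "(\<Sum>e\<in>K. Pm d e * S e j) = (\<Sum>i\<in>K. S d i * U i j)"
proof -
  have rhs: "(\<Sum>i\<in>K. S d i * U i j) = bet j * S d j + (if j = 0 then 0 else gam j * S d (j - 1))"
  proof -
    have "(\<Sum>i\<in>K. S d i * U i j) = (\<Sum>i\<in>K. (if i = j then bet j * S d j else 0) + (if i = j - 1 then (if j = 0 then 0 else gam j * S d (j - 1)) else 0))"
      by (rule sum.cong) (auto simp: U_def)
    also have "\<dots> = bet j * S d j + (if j = 0 then 0 else gam j * S d (j - 1))"
      using assms by (auto simp: sum.distrib)
    finally show ?thesis .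
  qed
  show ?thesis
  proof (cases j)
    case 0
    then show ?thesis unfolding rhs using assms by (simp add: Pm_row S_def bet_def)
  next
    case (Suc i)
    have nk: "real (n - k - l + d) = real n - real k - real l + real d" using n_ge by simp
    have ld: "real (l - d) = real l - real d" and kd: "real (k - d) = real k - real d" using assms kl by auto
    have pdv: "pd d = 2 * (real n - real k - real l + real d) * real d / (real n)^2"
      unfolding pd_def nk ..
    have puv: "pu d = 2 * (real l - real d) * (real k - real d) / (real n)^2"
      unfolding pu_def ld kd ..
    have F1: "real ((d + 1) choose j) - real (d choose j) = real (d choose i)"
      using Suc by simp
    have "(\<Sum>e\<in>K. Pm d e * S e j) = real (d choose j) + pd d * (real ((d - 1) choose j) - real (d choose j))
        + pu d * real (d choose i)"
      using assms by (simp add: Pm_apply S_def F1[symmetric])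
    also have "\<dots> = bet j * real (d choose j) + gam j * real (d choose i)"
      unfolding pdv puv bet_def gam_def
      apply (rule core[where Z = "real (d choose Suc j)"])
      using Suc binF2[of d i] binF3[of d j] binF3[of d i] n2 by (auto simp: algebra_simps)
    finally show ?thesis unfolding rhs using Suc by (simp add: S_def)
  qed
qed

end

lemma alt_sum: "(\<Sum>p\<le>m. (-1)^p * real (m choose p)) = (if m = 0 then 1 else 0)"
  using choose_alternating_sum[of m, where 'a=real] by (cases "m = 0") auto

lemma binv: assumes "a \<le> k" "b \<le> k"
  shows "(\<Sum>j\<in>{0..k}. (-1)^(j+b) * real (a choose j) * real (j choose b)) = (if a = b then 1 else 0)"
proof (cases "b \<le> a")
  case False
  have "(\<Sum>j\<in>{0..k}. (-1)^(j+b) * real (a choose j) * real (j choose b)) = (\<Sum>j\<in>{0..k}. 0)"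
  proof (rule sum.cong)
    fix j assume "j \<in> {0..k}"
    show "(-1)^(j+b) * real (a choose j) * real (j choose b) = 0"
      using False by (cases "j \<le> a") auto
  qed simp
  then show ?thesis using False by simp
next
  case True
  have "(\<Sum>j\<in>{0..k}. (-1)^(j+b) * real (a choose j) * real (j choose b)) =
        (\<Sum>j\<in>{b..a}. (-1)^(j+b) * real (a choose j) * real (j choose b))"
    by (rule sum.mono_neutral_right) (use assms in auto)
  also have "\<dots> = (\<Sum>j\<in>{0+b..(a-b)+b}. (-1)^(j+b) * real (a choose j) * real (j choose b))"
    using True by simp
  also have "\<dots> = (\<Sum>p\<in>{0..a-b}. (-1)^(p+b+b) * real (a choose (p+b)) * real ((p+b) choose b))"
    by (rule sum.shift_bounds_cl_nat_ivl)
  also have "\<dots> = (\<Sum>p\<in>{0..a-b}. real (a choose b) * ((-1)^p * real ((a-b) choose p)))"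
  proof (rule sum.cong)
    fix p assume p: "p \<in> {0..a-b}"
    have "(a choose (p+b)) * ((p+b) choose b) = (a choose b) * ((a - b) choose (p + b - b))"
      by (rule choose_mult) (use p True in auto)
    then have "real (a choose (p+b)) * real ((p+b) choose b) = real (a choose b) * real ((a - b) choose p)"
      by (metis add_diff_cancel_right' of_nat_mult)
    moreover have "(-1::real)^(p+b+b) = (-1)^p"
      by (simp add: power_add)
    ultimately show "(-1)^(p+b+b) * real (a choose (p+b)) * real ((p+b) choose b) = real (a choose b) * ((-1)^p * real ((a-b) choose p))"
      by (simp add: mult_ac)
  qed simp
  also have "\<dots> = real (a choose b) * (if a - b = 0 then 1 else 0)"
    by (simp add: sum_distrib_left[symmetric] atLeast0AtMost alt_sum)
  finally show ?thesis using True by auto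
qed

lemma binv2: assumes "a \<le> k" "b \<le> k"
  shows "(\<Sum>j\<in>{0..k}. (-1)^(a+j) * real (a choose j) * real (j choose b)) = (if a = b then 1 else 0)"
proof -
  have "(\<Sum>j\<in>{0..k}. (-1)^(a+j) * real (a choose j) * real (j choose b)) =
        (-1)^(a+b) * (\<Sum>j\<in>{0..k}. (-1)^(j+b) * real (a choose j) * real (j choose b))"
    unfolding sum_distrib_left
  proof (rule sum.cong)
    fix j
    have "(-1::real)^(a+j) = (-1)^(a+b) * (-1)^(j+b)"
    proof -
      have "(-1::real)^(a+b) * (-1)^(j+b) = (-1)^(a+j) * ((-1)^b)^2"
        by (simp add: power_add power2_eq_square mult_ac)
      then show ?thesis by (simp add: power_mult[symmetric] power_minus1_even)
    qed
    then show "(-1)^(a+j) * real (a choose j) * real (j choose b) = (-1)^(a+b) * ((-1)^(j+b) * real (a choose j) * real (j choose b))"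
      by simp
  qed simp
  then show ?thesis using binv[OF assms] by auto
qed

context tabs begin

primrec Um :: "nat \<Rightarrow> nat \<Rightarrow> nat \<Rightarrow> real" where
  "Um 0 i j = (if i = j then 1 else 0)"
| "Um (Suc t) i j = (\<Sum>r\<in>K. Um t i r * U r j)"

lemma Um_tri: "i \<le> k \<Longrightarrow> j < i \<Longrightarrow> Um t i j = 0"
proof (induction t arbitrary: j)
  case 0 then show ?case by simp
next
  case (Suc t)
  have "(\<Sum>r\<in>K. Um t i r * U r j) = (\<Sum>r\<in>K. 0)"
  proof (rule sum.cong)
    fix r assume "r \<in> K"
    show "Um t i r * U r j = 0"
    proof (cases "r < i")
      case True then show ?thesis using Suc by simp
    next
      case False then show ?thesis using Suc.prems by (auto simp: U_def)
    qed
  qed simp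
  then show ?case by simp
qed

lemma Um_diag: "i \<le> k \<Longrightarrow> Um t i i = bet i ^ t"
proof (induction t)
  case 0 then show ?case by simp
next
  case (Suc t)
  have "(\<Sum>r\<in>K. Um t i r * U r i) = (\<Sum>r\<in>K. if r = i then bet i ^ t * bet i else 0)"
  proof (rule sum.cong)
    fix r assume "r \<in> K"
    show "Um t i r * U r i = (if r = i then bet i ^ t * bet i else 0)"
    proof (cases "r < i")
      case True then show ?thesis using Suc Um_tri by simp
    next
      case False then show ?thesis using Suc by (auto simp: U_def)
    qed
  qed simp
  then show ?case using Suc by simp
qed

lemma QS: "d \<le> k \<Longrightarrow> j \<le> k \<Longrightarrow> (\<Sum>r\<in>K. Q t d r * S r j) = (\<Sum>i\<in>K. S d i * Um t i j)"
proof (induction t arbitrary: j)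
  case 0
  have "(\<Sum>r\<in>K. Q 0 d r * S r j) = (\<Sum>r\<in>K. if r = d then S d j else 0)"
    using 0 by (intro sum.cong) (auto simp: Q_0)
  moreover have "(\<Sum>i\<in>K. S d i * Um 0 i j) = (\<Sum>i\<in>K. if i = j then S d j else 0)"
    by (intro sum.cong) auto
  ultimately show ?case using 0 by simp
next
  case (Suc t)
  have "(\<Sum>r\<in>K. Q (Suc t) d r * S r j) = (\<Sum>r\<in>K. (\<Sum>s\<in>K. Q t d s * Pm s r) * S r j)"
    using Suc.prems by (intro sum.cong) (auto simp: Q_Suc)
  also have "\<dots> = (\<Sum>s\<in>K. Q t d s * (\<Sum>r\<in>K. Pm s r * S r j))"
    by (simp add: sum_distrib_left sum_distrib_right mult.assoc) (rule sum.swap)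
  also have "\<dots> = (\<Sum>s\<in>K. Q t d s * (\<Sum>i\<in>K. S s i * U i j))"
    using Suc.prems by (intro sum.cong) (auto simp: PS)
  also have "\<dots> = (\<Sum>i\<in>K. (\<Sum>s\<in>K. Q t d s * S s i) * U i j)"
    by (simp add: sum_distrib_left sum_distrib_right mult.assoc) (rule sum.swap)
  also have "\<dots> = (\<Sum>i\<in>K. (\<Sum>m\<in>K. S d m * Um t m i) * U i j)"
    using Suc by (intro sum.cong) auto
  also have "\<dots> = (\<Sum>m\<in>K. S d m * Um (Suc t) m j)"
    by (simp add: sum_distrib_left sum_distrib_right mult.assoc) (rule sum.swap)
  finally show ?case .
qed

definition R :: "nat \<Rightarrow> nat \<Rightarrow> real" where "R j e = (-1)^(j+e) * real (j choose e)"

lemma SR: "r \<le> k \<Longrightarrow> e \<le> k \<Longrightarrow> (\<Sum>j\<in>K. S r j * R j e) = (if r = e then 1 else 0)"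
  using binv[of r k e] by (simp add: S_def R_def mult_ac)

lemma RS: "j \<le> k \<Longrightarrow> i \<le> k \<Longrightarrow> (\<Sum>d\<in>K. R j d * S d i) = (if j = i then 1 else 0)"
  using binv2[of j k i] by (simp add: S_def R_def mult_ac)

lemma Q_expand: assumes "d \<le> k" "e \<le> k"
  shows "Q t d e = (\<Sum>j\<in>K. (\<Sum>i\<in>K. S d i * Um t i j) * R j e)"
proof -
  have "Q t d e = (\<Sum>r\<in>K. if r = e then Q t d r else 0)"
    using assms by simp
  also have "\<dots> = (\<Sum>r\<in>K. Q t d r * (\<Sum>j\<in>K. S r j * R j e))"
    using assms by (intro sum.cong) (auto simp: SR)
  also have "\<dots> = (\<Sum>j\<in>K. (\<Sum>r\<in>K. Q t d r * S r j) * R j e)"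
    by (simp add: sum_distrib_left sum_distrib_right mult.assoc) (rule sum.swap)
  also have "\<dots> = (\<Sum>j\<in>K. (\<Sum>i\<in>K. S d i * Um t i j) * R j e)"
    using assms by (intro sum.cong) (auto simp: QS)
  finally show ?thesis .
qed

lemma trace_inner: assumes "j \<le> k"
  shows "(\<Sum>d\<in>K. (\<Sum>i\<in>K. S d i * Um t i j) * R j d) = Um t j j"
proof -
  have "(\<Sum>d\<in>K. (\<Sum>i\<in>K. S d i * Um t i j) * R j d) = (\<Sum>d\<in>K. \<Sum>i\<in>K. Um t i j * (R j d * S d i))"
    by (intro sum.cong refl) (simp add: sum_distrib_right sum_distrib_left mult_ac)
  also have "\<dots> = (\<Sum>i\<in>K. \<Sum>d\<in>K. Um t i j * (R j d * S d i))"
    by (rule sum.swap)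
  also have "\<dots> = (\<Sum>i\<in>K. Um t i j * (\<Sum>d\<in>K. R j d * S d i))"
    by (simp add: sum_distrib_left)
  also have "\<dots> = (\<Sum>i\<in>K. if i = j then Um t j j else 0)"
    using assms by (intro sum.cong) (auto simp: RS)
  finally show ?thesis using assms by simp
qed

lemma trace_Q: "(\<Sum>d\<in>K. Q t d d) = (\<Sum>i\<in>K. bet i ^ t)"
proof -
  have "(\<Sum>d\<in>K. Q t d d) = (\<Sum>d\<in>K. \<Sum>j\<in>K. (\<Sum>i\<in>K. S d i * Um t i j) * R j d)"
    by (intro sum.cong) (auto simp: Q_expand)
  also have "\<dots> = (\<Sum>j\<in>K. \<Sum>d\<in>K. (\<Sum>i\<in>K. S d i * Um t i j) * R j d)"
    by (rule sum.swap)
  also have "\<dots> = (\<Sum>j\<in>K. Um t j j)"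
    by (intro sum.cong) (auto simp: trace_inner)
  also have "\<dots> = (\<Sum>i\<in>K. bet i ^ t)"
    by (intro sum.cong) (auto simp: Um_diag)
  finally show ?thesis .
qed

end

lemma wcs: fixes w a :: "'b \<Rightarrow> real"
  assumes "finite A" "\<And>x. x \<in> A \<Longrightarrow> w x \<ge> 0"
  shows "(\<Sum>x\<in>A. w x * a x)^2 \<le> (\<Sum>x\<in>A. w x) * (\<Sum>x\<in>A. w x * (a x)^2)"
proof -
  define W where "W = (\<Sum>x\<in>A. w x)"
  define M where "M = (\<Sum>x\<in>A. w x * a x)"
  define V where "V = (\<Sum>x\<in>A. w x * (a x)^2)"
  have W0: "W \<ge> 0" unfolding W_def using assms by (simp add: sum_nonneg)
  have "0 \<le> (\<Sum>x\<in>A. w x * (W * a x - M)^2)"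
    using assms by (intro sum_nonneg) auto
  also have "\<dots> = (\<Sum>x\<in>A. W^2 * (w x * (a x)^2) - (2 * W * M) * (w x * a x) + M^2 * w x)"
    by (intro sum.cong refl) (simp add: power2_eq_square algebra_simps)
  also have "\<dots> = W^2 * V - 2 * W * M * M + M^2 * W"
    by (simp add: W_def[symmetric] M_def[symmetric] V_def[symmetric] sum.distrib sum_subtractf
        sum_distrib_left[symmetric])
  finally have h: "0 \<le> W * (W * V - M^2)" by (simp add: power2_eq_square algebra_simps)
  show ?thesis
  proof (cases "W = 0")
    case True
    then have "\<forall>x\<in>A. w x = 0" using assms unfolding W_def by (simp add: sum_nonneg_eq_0_iff)
    then have "M = 0" unfolding M_def by simp
    then show ?thesis using W0 True by (simp add: M_def[symmetric] W_def[symmetric] V_def[symmetric])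
  next
    case False
    then have "W > 0" using W0 by simp
    then have "W * V - M^2 \<ge> 0" using h by (simp add: zero_le_mult_iff)
    then show ?thesis by (simp add: M_def[symmetric] W_def[symmetric] V_def[symmetric])
  qed
qed

context tabs begin

lemma fy_pos: "x \<in> tables n k l \<Longrightarrow> fy n k l x > 0"
  by (auto simp: tables_eq pi_pos pi_def[symmetric])

lemma fy_sum: "(\<Sum>x\<in>tables n k l. fy n k l x) = 1"
  using pi_sum by (simp add: sum_tables pi_def)

lemma tv_chi: assumes "x \<in> tables n k l"
  shows "(tv_dist n k l t x)^2 \<le> chi2 n k l t x"
proof -
  let ?P = "\<lambda>y. rt_pow n k l t x y" and ?p = "fy n k l"
  let ?T = "tables n k l"
  have chi0: "chi2 n k l t x \<ge> 0"
    unfolding chi2_def using fy_pos by (intro sum_nonneg divide_nonneg_pos) auto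
  have bnd: "\<bar>(\<Sum>y\<in>A. ?P y) - (\<Sum>y\<in>A. ?p y)\<bar> \<le> sqrt (chi2 n k l t x)" if A: "A \<in> Pow ?T" for A
  proof -
    have fA: "finite A" using A finite_tables finite_subset by auto
    have pA: "\<And>y. y \<in> A \<Longrightarrow> ?p y > 0" using A fy_pos by blast
    have pT: "\<And>y. y \<in> ?T \<Longrightarrow> ?p y > 0" using fy_pos by blast
    have nT: "\<And>y. y \<in> ?T - A \<Longrightarrow> 0 \<le> ?p y" using pT by (meson DiffD1 less_imp_le)
    have nT2: "\<And>y. y \<in> ?T - A \<Longrightarrow> 0 \<le> (?P y - ?p y)^2 / ?p y" using pT
      by (meson DiffD1 less_imp_le divide_nonneg_pos zero_le_power2)
    have "((\<Sum>y\<in>A. ?P y) - (\<Sum>y\<in>A. ?p y))^2 = (\<Sum>y\<in>A. ?p y * ((?P y - ?p y) / ?p y))^2"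
    proof -
      have "(\<Sum>y\<in>A. ?p y * ((?P y - ?p y) / ?p y)) = (\<Sum>y\<in>A. ?P y - ?p y)"
      proof (rule sum.cong)
        fix y assume "y \<in> A"
        then have "?p y > 0" using A fy_pos[of y] by auto
        then show "?p y * ((?P y - ?p y) / ?p y) = ?P y - ?p y" by simp
      qed simp
      then show ?thesis by (simp add: sum_subtractf)
    qed
    also have "\<dots> \<le> (\<Sum>y\<in>A. ?p y) * (\<Sum>y\<in>A. ?p y * ((?P y - ?p y) / ?p y)^2)"
      using fA pA by (intro wcs) (auto intro: less_imp_le)
    also have "(\<Sum>y\<in>A. ?p y * ((?P y - ?p y) / ?p y)^2) = (\<Sum>y\<in>A. (?P y - ?p y)^2 / ?p y)"
    proof (rule sum.cong)
      fix y assume "y \<in> A"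
      then have "?p y > 0" using pA by blast
      then show "?p y * ((?P y - ?p y) / ?p y)^2 = (?P y - ?p y)^2 / ?p y" by (simp add: power2_eq_square)
    qed simp
    also have "(\<Sum>y\<in>A. ?p y) * (\<Sum>y\<in>A. (?P y - ?p y)^2 / ?p y) \<le> 1 * chi2 n k l t x"
    proof (rule mult_mono)
      show "(\<Sum>y\<in>A. ?p y) \<le> 1"
        using fy_sum A nT finite_tables sum_mono2[of ?T A ?p] by simp
      show "(\<Sum>y\<in>A. (?P y - ?p y)^2 / ?p y) \<le> chi2 n k l t x"
        unfolding chi2_def using A finite_tables nT2 by (intro sum_mono2) auto
      show "0 \<le> (\<Sum>y\<in>A. (?P y - ?p y)^2 / ?p y)"
        using pA by (intro sum_nonneg divide_nonneg_pos) auto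
      show "(0::real) \<le> 1" by simp
    qed
    finally have "((\<Sum>y\<in>A. ?P y) - (\<Sum>y\<in>A. ?p y))^2 \<le> chi2 n k l t x" by simp
    then show ?thesis by (metis real_sqrt_abs real_sqrt_le_mono)
  qed
  have ne: "Pow ?T \<noteq> {}" by auto
  have tv_le: "tv_dist n k l t x \<le> sqrt (chi2 n k l t x)"
    unfolding tv_dist_def by (rule cSUP_least[OF ne]) (rule bnd)
  have bdd: "bdd_above ((\<lambda>A. \<bar>(\<Sum>y\<in>A. ?P y) - (\<Sum>y\<in>A. ?p y)\<bar>) ` Pow ?T)"
    using finite_tables by (intro bdd_above_finite) auto
  have tv_ge: "0 \<le> tv_dist n k l t x"
  proof -
    have "\<bar>(\<Sum>y\<in>{}. ?P y) - (\<Sum>y\<in>{}. ?p y)\<bar> \<le> tv_dist n k l t x"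
      unfolding tv_dist_def by (rule cSUP_upper[OF _ bdd]) auto
    then show ?thesis by simp
  qed
  have "(tv_dist n k l t x)^2 \<le> (sqrt (chi2 n k l t x))^2"
    using tv_le tv_ge by (intro power_mono) auto
  then show ?thesis using chi0 by simp
qed

lemma chi_total: "(\<Sum>x\<in>tables n k l. fy n k l x * chi2 n k l t x) = (\<Sum>i\<in>{1..k}. bet i ^ (2 * t))"
proof -
  have "(\<Sum>x\<in>tables n k l. fy n k l x * chi2 n k l t x) =
        (\<Sum>d\<in>K. pi d * (\<Sum>e\<in>K. (Q t d e - pi e)^2 / pi e))"
    unfolding sum_tables chi2_def pi_def Q_def ..
  also have "\<dots> = (\<Sum>i\<in>K. bet i ^ (t + t)) - 1"
    unfolding chi_sum_trace trace_Q ..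
  also have "K = insert 0 {1..k}" by auto
  also have "(\<Sum>i\<in>insert 0 {1..k}. bet i ^ (t + t)) = 1 + (\<Sum>i\<in>{1..k}. bet i ^ (t + t))"
    by (simp add: bet_def)
  finally show ?thesis by (simp add: mult_2)
qed

lemma bet_bounds: assumes "1 \<le> i" "i \<le> k" shows "0 \<le> bet i" "bet i \<le> 1 - 2 / real n"
proof -
  have nn: "real n > 0" using n2 by simp
  have i2: "2 * real i \<le> real n" using assms kl ln by linarith
  have a: "2 * real i * (real n - real i + 1) \<le> real n * real n"
  proof -
    have "2 * real i * (real n - real i + 1) \<le> real n * (real n - real i + 1)"
      using i2 assms by (intro mult_right_mono) auto
    also have "\<dots> \<le> real n * real n" using assms nn by (intro mult_left_mono) auto
    finally show ?thesis .
  qed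
  have b: "2 * real n \<le> 2 * real i * (real n - real i + 1)"
  proof -
    have "0 \<le> (real i - 1) * (real n - real i)" using assms i2 by (intro mult_nonneg_nonneg) auto
    then show ?thesis by (simp add: algebra_simps)
  qed
  show "0 \<le> bet i" unfolding bet_def using a nn by (simp add: field_simps power2_eq_square)
  have "2 / real n = 2 * real n / (real n)^2" using nn by (simp add: power2_eq_square)
  then show "bet i \<le> 1 - 2 / real n" unfolding bet_def using b nn
    by (simp add: divide_right_mono)
qed

end

theorem lemma3p2:
  fixes n k l :: nat
  assumes "1 \<le> k" and "k \<le> l" and "l \<le> n div 2"
  shows "(\<forall>(c::real) (t::nat). c > 0 \<longrightarrow> real t = (real n / 4) * (ln (real k) + c) \<longrightarrow>
            (\<Sum>x\<in>tables n k l. fy n k l x * (tv_dist n k l t x)^2) \<le> exp (- c))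
       \<and> (\<forall>(c::real) (t::nat). real t = c * real n / 4 \<longrightarrow>
            (\<Sum>x\<in>tables n k l. fy n k l x * chi2 n k l t x) \<ge> 1 - c)"
proof -
  interpret tabs n k l using assms by unfold_locales
  have nn: "real n \<ge> 2" using n2 by simp
  define b1 where "b1 = 1 - 2 / real n"
  have h2: "2 / real n \<le> 1" using nn by simp
  have b1: "0 \<le> b1" using h2 unfolding b1_def by linarith
  have b1e: "b1 \<le> exp (- 2 / real n)"
    using exp_ge_add_one_self[of "- 2 / real n"] unfolding b1_def by simp
  have part1: "(\<Sum>x\<in>tables n k l. fy n k l x * (tv_dist n k l t x)^2) \<le> exp (- c)"
    if c: "c > 0" and t: "real t = (real n / 4) * (ln (real k) + c)" for c t
  proof -
    have bb: "b1 ^ (2 * t) \<le> exp (- (ln (real k) + c))"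
    proof -
      have "b1 ^ (2 * t) \<le> exp (- 2 / real n) ^ (2 * t)"
        using b1e b1 by (rule power_mono)
      also have "exp (- 2 / real n) ^ (2 * t) = exp (real (2 * t) * (- 2 / real n))"
        by (rule exp_of_nat_mult[symmetric])
      also have "real (2 * t) * (- 2 / real n) = - (ln (real k) + c)"
        using t nn by (simp add: field_simps)
      finally show ?thesis .
    qed
    have "(\<Sum>x\<in>tables n k l. fy n k l x * (tv_dist n k l t x)^2) \<le> (\<Sum>x\<in>tables n k l. fy n k l x * chi2 n k l t x)"
    proof (rule sum_mono)
      fix x assume x: "x \<in> tables n k l"
      show "fy n k l x * (tv_dist n k l t x)^2 \<le> fy n k l x * chi2 n k l t x"
        using tv_chi[OF x] fy_pos[OF x] by (intro mult_left_mono) auto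
    qed
    also have "\<dots> = (\<Sum>i\<in>{1..k}. bet i ^ (2 * t))" by (rule chi_total)
    also have "\<dots> \<le> (\<Sum>i\<in>{1..k}. b1 ^ (2 * t))"
    proof (rule sum_mono)
      fix i assume "i \<in> {1..k}"
      then have "0 \<le> bet i" "bet i \<le> b1" using bet_bounds[of i] unfolding b1_def by auto
      then show "bet i ^ (2 * t) \<le> b1 ^ (2 * t)" by (rule power_mono[rotated])
    qed
    also have "\<dots> = real k * b1 ^ (2 * t)" by simp
    also have "\<dots> \<le> real k * exp (- (ln (real k) + c))"
      using bb by (rule mult_left_mono) simp
    also have "real k * exp (- (ln (real k) + c)) = exp (- c)"
    proof -
      have kp: "real k > 0" using assms(1) by simp
      have "exp (- (ln (real k) + c)) = exp (- c) / real k"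
        using kp by (simp add: exp_add exp_minus exp_diff field_simps)
      then show ?thesis using kp by simp
    qed
    finally show ?thesis .
  qed
  have part2: "(\<Sum>x\<in>tables n k l. fy n k l x * chi2 n k l t x) \<ge> 1 - c"
    if t: "real t = c * real n / 4" for c t
  proof -
    have "1 - c = 1 + real (2 * t) * (- 2 / real n)"
      using t nn by (simp add: field_simps)
    also have "\<dots> \<le> (1 + (- 2 / real n)) ^ (2 * t)"
      by (rule Bernoulli_inequality) (use h2 in simp)
    also have "1 + (- 2 / real n) = bet 1"
      using nn by (simp add: bet_def field_simps power2_eq_square)
    also have "bet 1 ^ (2 * t) \<le> (\<Sum>i\<in>{1..k}. bet i ^ (2 * t))"
    proof (rule member_le_sum)
      show "1 \<in> {1..k}" using assms(1) by simp
      fix i assume "i \<in> {1..k} - {1}"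
      then have "0 \<le> bet i" using bet_bounds(1)[of i] by auto
      then show "0 \<le> bet i ^ (2 * t)" by simp
    qed simp
    also have "\<dots> = (\<Sum>x\<in>tables n k l. fy n k l x * chi2 n k l t x)" by (rule chi_total[symmetric])
    finally show ?thesis .
  qed
  show ?thesis using part1 part2 by blast
qed

end
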